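(* Let $\theta\in(0,\pi)$ and let $\mathcal{B}_\theta$ be the moduli space of spherical bigons of angle $\theta$ with labeled sides, parametrized by $(K_1,K_2)\in\mathbb{R}^2$, where $K_i=\log\cot r_i$ and $r_i$ is the radius of the disk $D_i\subset\mathbb{S}^2$ whose boundary contains side $i$. Let $T_i$ be the total geodesic curvature of side $i$ (its length times $\cot r_i$). Then the matrix-valued function $$\begin{pmatrix}\frac{\partial T_1}{\partial K_1}&\frac{\partial T_1}{\partial K_2}\\[3pt]\frac{\partial T_2}{\partial K_1}&\frac{\partial T_2}{\partial K_2}\end{pmatrix}$$ on $\mathcal{B}_\theta$ is symmetric and positive definite at every point.
   Context: A spherical bigon is the intersection $D_1\cap D_2$ of two open round disks in $\mathbb{S}^2$ of radii less than $\frac{\pi}{2}$, neither containing the other, with angle the interior angle at its corners; $\mathcal{B}_\theta$ consists of such bigons of angle $\theta$ with the two sides labeled $1,2$, up to label-preserving isometry. The map $(r_1,r_2)$ is a bijection $\mathcal{B}_\theta\to(0,\frac{\pi}{2})^2$, so $(K_1,K_2)$ parametrizes $\mathcal{B}_\theta$ by $\mathbb{R}^2$. *)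

theory Defs
  imports "HOL-Analysis.Analysis"
begin

definition sph_angle :: "real^3 \<Rightarrow> real^3 \<Rightarrow> real^3 \<Rightarrow> real" where
  "sph_angle a b c =
     (let u = b - (a \<bullet> b) *\<^sub>R a; v = c - (a \<bullet> c) *\<^sub>R a
      in arccos ((u \<bullet> v) / (norm u * norm v)))"

text \<open>Corner p of the bigon, and the centers of the disks D1, D2 of radii r1, r2 whose
  boundaries pass through p. The inward unit normals at p are (0,1,0) and
  (0,cos(pi-theta),sin(pi-theta)); the interior angle of D1 \<inter> D2 at p is theta.\<close>
definition bigon_corner :: "real^3" where
  "bigon_corner = vector [1, 0, 0]"

definition bigon_center1 :: "real \<Rightarrow> real^3" where
  "bigon_center1 r1 = vector [cos r1, sin r1, 0]"

definition bigon_center2 :: "real \<Rightarrow> real \<Rightarrow> real^3" where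
  "bigon_center2 \<theta> r2 = vector [cos r2, sin r2 * cos (pi - \<theta>), sin r2 * sin (pi - \<theta>)]"

text \<open>Length of side i (an arc of the circle of spherical radius r_i about c_i,
  going from corner p to the mirror corner, through the direction of c_j):
  rotation angle 2 * (angle at c_i between p and c_j), times sin r_i.\<close>
definition side_length1 :: "real \<Rightarrow> real \<Rightarrow> real \<Rightarrow> real" where
  "side_length1 \<theta> r1 r2 =
     2 * sph_angle (bigon_center1 r1) bigon_corner (bigon_center2 \<theta> r2) * sin r1"

definition side_length2 :: "real \<Rightarrow> real \<Rightarrow> real \<Rightarrow> real" where
  "side_length2 \<theta> r1 r2 =
     2 * sph_angle (bigon_center2 \<theta> r2) bigon_corner (bigon_center1 r1) * sin r2"

text \<open>Radius from the coordinate K = log cot r, i.e. cot r = exp K, r in (0, pi/2).\<close>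
definition radius_of :: "real \<Rightarrow> real" where
  "radius_of K = arctan (exp (- K))"

definition total_curv1 :: "real \<Rightarrow> real \<Rightarrow> real \<Rightarrow> real" where
  "total_curv1 \<theta> K1 K2 = side_length1 \<theta> (radius_of K1) (radius_of K2) * cot (radius_of K1)"

definition total_curv2 :: "real \<Rightarrow> real \<Rightarrow> real \<Rightarrow> real" where
  "total_curv2 \<theta> K1 K2 = side_length2 \<theta> (radius_of K1) (radius_of K2) * cot (radius_of K2)"

end

theory Submission imports Defs begin

lemma dA:
  fixes s c y K :: real
  assumes s: "s > 0" and y: "y > 0" and sc: "s^2 + c^2 = 1"
  defines "x \<equiv> exp K"
  defines "X \<equiv> sqrt (1 + x^2)"
  defines "Q \<equiv> s^2 + x^2 + y^2 + 2*x*y*c"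
  shows "((\<lambda>k. 2 * (pi/2 - arctan ((y + exp k * c) / (s * sqrt (1 + (exp k)^2))))
            * exp k / sqrt (1 + (exp k)^2)) has_real_derivative
     (2*x*(pi/2 - arctan ((y + x * c) / (s * X)))/X^3 - 2*x^2 * s * (c-x*y)/(Q*X^2))) (at K)"
proof -
  have x2: "\<not> 1 + x^2 < 0" by (simp add: not_less add_nonneg_nonneg)
  have X0: "X > 0" unfolding X_def by (simp add: add_pos_nonneg)
  have X2: "X^2 = 1 + x^2" unfolding X_def by (simp add: add_pos_nonneg)
  have Qe: "Q = s^2*X^2 + (y+x*c)^2" unfolding Q_def X2 using sc by algebra
  have Qp: "Q > 0" unfolding Qe using s X0 by (simp add: add_pos_nonneg)
  have inv: "inverse (1 + ((y + x*c)/(s*X))^2) = s^2*X^2/Q"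
    using s X0 Qp unfolding Qe by (simp add: field_simps power2_eq_square)
  define t where "t = arctan ((y + x * c) / (s * X))"
  have key: "((x * (pi - 2 * t) -
       inverse (1 + ((y + x * c) / (s * X))^2) *
       (x * c * (s * X) - (y + x * c) * (inverse X * (x * x) * s)) * 2 * x /
       (s * X * (s * X))) * X -
      (pi - 2 * t) * x * (inverse X * (x * x))) / (X * X) =
     2 * x * (pi / 2 - t) / X ^ 3 - 2 * x^2 * s * (c - x * y) / (Q * X^2)"
  proof -
    have N: "x * c * (s * X) - (y + x * c) * (inverse X * (x * x) * s) = s*x * (c-x*y)/X"
      using X0 X2 by (simp add: field_simps) algebra
    have "inverse (1 + ((y + x * c) / (s * X))^2) *
       (x * c * (s * X) - (y + x * c) * (inverse X * (x * x) * s)) * 2 * x /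
       (s * X * (s * X)) = 2*x^2 * s * (c-x*y)/(Q*X)"
      unfolding N inv using s X0 Qp by (simp add: field_simps power2_eq_square)
    moreover have "((x * (pi - 2 * t) - 2*x^2 * s * (c-x*y)/(Q*X)) * X -
      (pi - 2 * t) * x * (inverse X * (x * x))) / (X * X) =
     2 * x * (pi / 2 - t) / X ^ 3 - 2 * x^2 * s * (c - x * y) / (Q * X^2)"
    proof -
      have e1: "X - inverse X * (x*x) = 1/X" using X0 X2 by (simp add: field_simps power2_eq_square)
      have "((x * (pi - 2 * t) - 2*x^2 * s * (c-x*y)/(Q*X)) * X -
          (pi - 2 * t) * x * (inverse X * (x * x))) =
          x * (pi - 2*t) * (X - inverse X * (x*x)) - 2*x^2 * s * (c-x*y)/(Q*X) * X"
        by (simp add: algebra_simps)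
      also have "\<dots> = x * (pi - 2*t) / X - 2*x^2 * s * (c-x*y)/Q"
        unfolding e1 using X0 by simp
      finally have e2: "((x * (pi - 2 * t) - 2*x^2 * s * (c-x*y)/(Q*X)) * X -
          (pi - 2 * t) * x * (inverse X * (x * x))) = x * (pi - 2*t) / X - 2*x^2 * s * (c-x*y)/Q" .
      have e3: "(x * (pi - 2*t) / X - 2*x^2 * s * (c-x*y)/Q) / (X*X) = 
         (x * (pi - 2*t)) / X^3 - 2*x^2 * s * (c-x*y)/(Q*X^2)"
        by (simp add: diff_divide_distrib power3_eq_cube power2_eq_square mult.assoc)
      show ?thesis unfolding e2 e3 by (simp add: algebra_simps)
    qed
    ultimately show ?thesis by simp
  qed
  show ?thesis
    apply (auto intro!: derivative_eq_intros simp: x_def[symmetric] X_def[symmetric] add_pos_pos)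
    using X0 s key x2 unfolding t_def by (auto simp: add_pos_nonneg add_nonneg_eq_0_iff not_less[symmetric])
qed

lemma dB:
  fixes s c x K :: real
  assumes s: "s > 0" and x: "x > 0" and sc: "s^2 + c^2 = 1"
  defines "y \<equiv> exp K"
  defines "Q \<equiv> s^2 + x^2 + y^2 + 2*x*y*c"
  shows "((\<lambda>k. 2 * (pi/2 - arctan ((exp k + x * c) / (s * sqrt (1 + x^2))))
            * x / sqrt (1 + x^2)) has_real_derivative (- 2 * x * y * s / Q)) (at K)"
proof -
  define X where "X = sqrt (1 + x^2)"
  have X0: "X > 0" unfolding X_def by (simp add: add_pos_nonneg)
  have X2: "X^2 = 1 + x^2" unfolding X_def by (simp add: add_pos_nonneg)
  have Qe: "Q = s^2*X^2 + (y+x*c)^2" unfolding Q_def X2 using sc by algebra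
  have Qp: "Q > 0" unfolding Qe using s X0 by (simp add: add_pos_nonneg)
  have inv: "inverse (1 + ((y + x*c)/(s*X))^2) = s^2*X^2/Q"
    using s X0 Qp unfolding Qe by (simp add: field_simps power2_eq_square)
  show ?thesis
    apply (auto intro!: derivative_eq_intros simp: y_def[symmetric] X_def[symmetric])
    using X0 s Qp unfolding inv by (auto simp: field_simps power2_eq_square)
qed

lemma inner3: "inner (vector [a1, a2, a3]) (vector [b1, b2, b3] :: real^3) = a1*b1 + a2*b2 + a3*b3"
  by (simp add: inner_vec_def sum_3)

lemma sph_angle_unit:
  assumes "a \<bullet> a = 1" "b \<bullet> b = 1" "c \<bullet> c = 1"
  shows "sph_angle a b c = arccos ((b \<bullet> c - (a \<bullet> b) * (a \<bullet> c)) /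
            (sqrt (1 - (a \<bullet> b)^2) * sqrt (1 - (a \<bullet> c)^2)))"
proof -
  have u: "(b - (a \<bullet> b) *\<^sub>R a) \<bullet> (b - (a \<bullet> b) *\<^sub>R a) = 1 - (a \<bullet> b)^2"
    using assms by (simp add: inner_diff_left inner_diff_right inner_commute power2_eq_square)
  have v: "(c - (a \<bullet> c) *\<^sub>R a) \<bullet> (c - (a \<bullet> c) *\<^sub>R a) = 1 - (a \<bullet> c)^2"
    using assms by (simp add: inner_diff_left inner_diff_right inner_commute power2_eq_square)
  have uv: "(b - (a \<bullet> b) *\<^sub>R a) \<bullet> (c - (a \<bullet> c) *\<^sub>R a) = b \<bullet> c - (a \<bullet> b) * (a \<bullet> c)"
    using assms by (simp add: inner_diff_left inner_diff_right inner_commute)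
  show ?thesis unfolding sph_angle_def Let_def norm_eq_sqrt_inner u v uv ..
qed

lemma rad:
  fixes K :: real
  defines "x \<equiv> exp K"
  shows "sin (radius_of K) = 1 / sqrt (1 + x^2)" "cos (radius_of K) = x / sqrt (1 + x^2)"
    "cot (radius_of K) = x"
proof -
  have x0: "x > 0" unfolding x_def by simp
  have e: "exp (-K) = 1/x" unfolding x_def by (simp add: exp_minus field_simps)
  have s1: "sqrt (1 + (1/x)^2) = sqrt (1 + x^2) / x"
  proof -
    have "1 + (1/x)^2 = (1 + x^2) / x^2" using x0 by (simp add: field_simps)
    then show ?thesis using x0 by (simp add: real_sqrt_divide)
  qed
  show a: "sin (radius_of K) = 1 / sqrt (1 + x^2)"
    unfolding radius_of_def sin_arctan e s1 using x0 by (simp add: field_simps)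
  show b: "cos (radius_of K) = x / sqrt (1 + x^2)"
    unfolding radius_of_def cos_arctan e s1 using x0 by (simp add: field_simps)
  show "cot (radius_of K) = x" unfolding cot_def a b using x0
    by (simp add: field_simps add_pos_nonneg) (smt (verit) zero_le_power2)
qed

lemma angle_formula:
  fixes x y s c :: real
  assumes x: "x > 0" and y: "y > 0" and s: "s > 0" and sc: "s^2 + c^2 = 1"
  shows "arccos ((y / sqrt (1 + y^2) - (x / sqrt (1 + x^2)) * ((x*y - c) / (sqrt (1 + x^2) * sqrt (1 + y^2)))) /
     (sqrt (1 - (x / sqrt (1 + x^2))^2) * sqrt (1 - ((x*y - c) / (sqrt (1 + x^2) * sqrt (1 + y^2)))^2)))
     = pi/2 - arctan ((y + x*c) / (s * sqrt (1 + x^2)))"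
proof -
  define X where "X = sqrt (1 + x^2)"
  define Y where "Y = sqrt (1 + y^2)"
  define Q where "Q = s^2 + x^2 + y^2 + 2*x*y*c"
  have X0: "X > 0" unfolding X_def by (simp add: add_pos_nonneg)
  have X2: "X^2 = 1 + x^2" unfolding X_def by (simp add: add_pos_nonneg)
  have Y0: "Y > 0" unfolding Y_def by (simp add: add_pos_nonneg)
  have Y2: "Y^2 = 1 + y^2" unfolding Y_def by (simp add: add_pos_nonneg)
  have Qe: "Q = s^2*X^2 + (y+x*c)^2" unfolding Q_def X2 using sc by algebra
  have Qe2: "X^2*Y^2 - (x*y-c)^2 = Q" unfolding Q_def X2 Y2 using sc by algebra
  have Qp: "Q > 0" unfolding Qe using s X0 by (simp add: add_pos_nonneg)
  have h1: "sqrt (1 - (x / X)^2) = 1 / X"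
  proof -
    have p: "1 + x^2 > 0" by (simp add: add_pos_nonneg)
    have "1 - (x / X)^2 = (1/X)^2" using X0 X2 p by (simp add: field_simps)
    then show ?thesis using X0 by simp
  qed
  have gen: "\<And>a b::real. b > 0 \<Longrightarrow> 1 - (a/b)^2 = (b^2 - a^2)/b^2"
    by (simp add: field_simps)
  have h2: "sqrt (1 - ((x*y - c) / (X * Y))^2) = sqrt Q / (X * Y)"
  proof -
    have "1 - ((x*y - c) / (X * Y))^2 = ((X*Y)^2 - (x*y-c)^2) / (X*Y)^2" using X0 Y0
      by (intro gen) simp
    also have "\<dots> = Q / (X*Y)^2" using Qe2 by (simp add: power_mult_distrib)
    finally have "1 - ((x*y - c) / (X * Y))^2 = Q / (X*Y)^2" .
    then show ?thesis using X0 Y0 by (simp add: real_sqrt_divide)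
  qed
  have h3: "y / Y - (x / X) * ((x*y - c) / (X * Y)) = (y + x*c) / (X^2 * Y)"
  proof -
    have "y / Y - (x / X) * ((x*y - c) / (X * Y)) = (y*X^2 - x*(x*y-c))/(X^2*Y)"
      using X0 Y0 by (simp add: field_simps power2_eq_square)
    also have "y*X^2 - x*(x*y-c) = y + x*c" unfolding X2 by algebra
    finally show ?thesis .
  qed
  define t where "t = (y + x*c) / sqrt Q"
  have sQ: "sqrt Q > 0" using Qp by simp
  have arg: "(y / Y - (x / X) * ((x*y - c) / (X * Y))) / (sqrt (1 - (x / X)^2) * sqrt (1 - ((x*y - c) / (X * Y))^2)) = t"
    unfolding h1 h2 h3 t_def using X0 Y0 sQ by (simp add: field_simps power2_eq_square)
  have omt: "1 - t^2 = (s*X/sqrt Q)^2"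
  proof -
    have "1 - t^2 = ((sqrt Q)^2 - (y + x*c)^2) / (sqrt Q)^2" unfolding t_def using sQ by (rule gen)
    also have "\<dots> = (s*X)^2 / (sqrt Q)^2" using Qp Qe by (simp add: power_mult_distrib)
    finally show ?thesis by (simp add: power_divide)
  qed
  have sXp: "s * X / sqrt Q > 0" using s X0 sQ by simp
  have tb: "-1 < t \<and> t < 1"
  proof -
    have "t^2 < 1" using omt sXp by (smt (verit) zero_less_power2)
    then have "\<bar>t\<bar> < 1" by (simp add: abs_square_less_1)
    then show ?thesis by linarith
  qed
  have "arccos t = pi/2 - arctan (t / sqrt (1 - t^2))" using tb by (simp add: arccos_arctan)
  also have "t / sqrt (1 - t^2) = (y + x*c) / (s * X)"
  proof -
    have "sqrt (1 - t^2) = s*X/sqrt Q" unfolding omt using s X0 sQ by simp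
    then show ?thesis using sQ s X0 by (simp add: t_def)
  qed
  finally show ?thesis unfolding X_def[symmetric] Y_def[symmetric] arg .
qed

definition FF :: "real \<Rightarrow> real \<Rightarrow> real \<Rightarrow> real \<Rightarrow> real" where
  "FF s c x y = 2 * (pi/2 - arctan ((y + x * c) / (s * sqrt (1 + x^2)))) * x / sqrt (1 + x^2)"

lemma T_eq:
  fixes \<theta> K1 K2 :: real
  assumes th: "0 < \<theta>" "\<theta> < pi"
  shows "total_curv1 \<theta> K1 K2 = FF (sin \<theta>) (cos \<theta>) (exp K1) (exp K2)"
    "total_curv2 \<theta> K1 K2 = FF (sin \<theta>) (cos \<theta>) (exp K2) (exp K1)"
proof -
  define x where "x = exp K1"
  define y where "y = exp K2"
  define s where "s = sin \<theta>"
  define c where "c = cos \<theta>"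
  define X where "X = sqrt (1 + x^2)"
  define Y where "Y = sqrt (1 + y^2)"
  have x0: "x > 0" and y0: "y > 0" unfolding x_def y_def by auto
  have s0: "s > 0" unfolding s_def using th by (simp add: sin_gt_zero)
  have sc: "s^2 + c^2 = 1" unfolding s_def c_def by simp
  have X0: "X > 0" unfolding X_def by (simp add: add_pos_nonneg)
  have X2: "X^2 = 1 + x^2" unfolding X_def by (simp add: add_pos_nonneg)
  have Y0: "Y > 0" unfolding Y_def by (simp add: add_pos_nonneg)
  have Y2: "Y^2 = 1 + y^2" unfolding Y_def by (simp add: add_pos_nonneg)
  have c1: "bigon_center1 (radius_of K1) = vector [x/X, 1/X, 0]"
    unfolding bigon_center1_def rad x_def X_def by simp
  have c2: "bigon_center2 \<theta> (radius_of K2) = vector [y/Y, -c/Y, s/Y]"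
    unfolding bigon_center2_def rad y_def Y_def s_def c_def by simp
  have p: "bigon_corner = vector [1, 0, 0]" unfolding bigon_corner_def ..
  have n1: "bigon_center1 (radius_of K1) \<bullet> bigon_center1 (radius_of K1) = 1"
  proof -
    have "x/X*(x/X) + 1/X*(1/X) + 0*0 = (1 + x^2)/X^2"
      using X0 by (simp add: field_simps power2_eq_square)
    also have "\<dots> = 1" unfolding X2[symmetric] using X0 by simp
    finally show ?thesis unfolding c1 inner3 .
  qed
  have n2: "bigon_center2 \<theta> (radius_of K2) \<bullet> bigon_center2 \<theta> (radius_of K2) = 1"
  proof -
    have "y/Y*(y/Y) + -c/Y*(-c/Y) + s/Y*(s/Y) = (y^2 + (s^2 + c^2))/Y^2"
      using Y0 by (simp add: field_simps power2_eq_square)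
    also have "\<dots> = 1"
    proof -
      have "y^2 + 1 = Y^2" using Y2 by simp
      then show ?thesis unfolding sc using Y0 by simp
    qed
    finally show ?thesis unfolding c2 inner3 .
  qed
  have np: "bigon_corner \<bullet> bigon_corner = 1" unfolding p inner3 by simp
  have i1p: "bigon_center1 (radius_of K1) \<bullet> bigon_corner = x/X"
    unfolding c1 p inner3 by simp
  have i2p: "bigon_center2 \<theta> (radius_of K2) \<bullet> bigon_corner = y/Y"
    unfolding c2 p inner3 by simp
  have i12: "bigon_center1 (radius_of K1) \<bullet> bigon_center2 \<theta> (radius_of K2) = (x*y - c)/(X*Y)"
    unfolding c1 c2 inner3 using X0 Y0 by (simp add: field_simps)
  have a1: "sph_angle (bigon_center1 (radius_of K1)) bigon_corner (bigon_center2 \<theta> (radius_of K2))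
      = pi/2 - arctan ((y + x*c) / (s * X))"
    unfolding sph_angle_unit[OF n1 np n2] i1p i12 inner_commute[of bigon_corner] i2p
    unfolding X_def Y_def by (rule angle_formula[OF x0 y0 s0 sc])
  have a2: "sph_angle (bigon_center2 \<theta> (radius_of K2)) bigon_corner (bigon_center1 (radius_of K1))
      = pi/2 - arctan ((x + y*c) / (s * Y))"
  proof -
    have e: "(x*y - c)/(X*Y) = (y*x - c)/(Y*X)" by (simp add: mult.commute)
    show ?thesis
      unfolding sph_angle_unit[OF n2 np n1] i2p inner_commute[of _ "bigon_center1 (radius_of K1)"]
        inner_commute[of bigon_corner] i1p i12 e
      unfolding X_def Y_def by (rule angle_formula[OF y0 x0 s0 sc])
  qed
  show "total_curv1 \<theta> K1 K2 = FF (sin \<theta>) (cos \<theta>) (exp K1) (exp K2)"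
    unfolding total_curv1_def side_length1_def a1 FF_def rad x_def[symmetric] y_def[symmetric]
      s_def[symmetric] c_def[symmetric] X_def[symmetric] by simp
  show "total_curv2 \<theta> K1 K2 = FF (sin \<theta>) (cos \<theta>) (exp K2) (exp K1)"
    unfolding total_curv2_def side_length2_def a2 FF_def rad x_def[symmetric] y_def[symmetric]
      s_def[symmetric] c_def[symmetric] Y_def[symmetric] by simp
qed

lemma arc_ineq: fixes u :: real shows "u / (1 + u^2) < pi/2 - arctan u"
proof (cases "u > 0")
  case False
  have "u / (1 + u^2) \<le> 0" using False by (simp add: divide_nonpos_pos add_pos_nonneg)
  moreover have "arctan u < pi/2" by (rule arctan_ubound)
  ultimately show ?thesis by linarith
next
  case True
  define S where "S = sqrt (1 + u^2)"
  define v where "v = pi/2 - arctan u"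
  have S0: "S > 0" unfolding S_def by (simp add: add_pos_nonneg)
  have S2: "S^2 = 1 + u^2" unfolding S_def by (simp add: add_pos_nonneg)
  have uS: "u < S" unfolding S_def by (rule real_less_rsqrt) simp
  have v0: "v > 0" unfolding v_def using arctan_ubound[of u] by linarith
  have sv: "sin v = 1 / S" unfolding v_def S_def by (simp add: sin_diff cos_arctan)
  have "u / (1 + u^2) = (1/S) * (u/S)" unfolding S2[symmetric] by (simp add: power2_eq_square)
  also have "\<dots> < 1/S" using S0 uS True by (simp add: field_simps)
  also have "\<dots> \<le> v" using sin_x_le_x[of v] v0 sv by simp
  finally show ?thesis unfolding v_def .
qed

lemma diag:
  fixes s c x y :: real
  assumes s: "s > 0" and x: "x > 0" and y: "y > 0" and sc: "s^2 + c^2 = 1"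
  defines "X \<equiv> sqrt (1 + x^2)"
  defines "Q \<equiv> s^2 + x^2 + y^2 + 2*x*y*c"
  shows "2*x*(pi/2 - arctan ((y + x * c) / (s * X)))/X^3 - 2*x^2 * s * (c-x*y)/(Q*X^2) - 2*x*y * s/Q > 0"
proof -
  have X0: "X > 0" unfolding X_def by (simp add: add_pos_nonneg)
  have X2: "X^2 = 1 + x^2" unfolding X_def by (simp add: add_pos_nonneg)
  have Qe: "Q = s^2*X^2 + (y+x*c)^2" unfolding Q_def X2 using sc by algebra
  have Qp: "Q > 0" unfolding Qe using s X0 by (simp add: add_pos_nonneg)
  define u where "u = (y + x * c) / (s * X)"
  define al where "al = pi/2 - arctan u"
  have uu: "u / (1 + u^2) = s*X*(y+x*c)/Q"
  proof -
    have g: "\<And>N D::real. D > 0 \<Longrightarrow> (N/D)/(1+(N/D)^2) = N*D/(D^2+N^2)"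
    proof -
      fix N D :: real assume D: "D > 0"
      have "D^2 + N^2 > 0" using D by (simp add: add_pos_nonneg)
      then show "(N/D)/(1+(N/D)^2) = N*D/(D^2+N^2)" using D by (simp add: field_simps power2_eq_square)
    qed
    show ?thesis unfolding u_def using g[of "s*X" "y + x*c"] s X0 Qe by (simp add: power_mult_distrib mult.commute)
  qed
  have "2*x*al/X^3 - 2*x^2 * s * (c-x*y)/(Q*X^2) - 2*x*y * s/Q
      = 2*x*al/X^3 - 2*x * s*(x*c - x^2*y + y*X^2)/(Q*X^2)"
    using X0 Qp by (simp add: field_simps power2_eq_square)
  also have "x*c - x^2*y + y*X^2 = y + x*c" unfolding X2 by algebra
  also have "2*x*al/X^3 - 2*x * s*(y + x*c)/(Q*X^2) = 2*x/X^3 * (al - u/(1+u^2))"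
    unfolding uu using X0 Qp by (simp add: field_simps power2_eq_square power3_eq_cube)
  finally have e: "2*x*al/X^3 - 2*x^2 * s * (c-x*y)/(Q*X^2) - 2*x*y * s/Q = 2*x/X^3 * (al - u/(1+u^2))" .
  have "al - u/(1+u^2) > 0" unfolding al_def using arc_ineq[of u] by linarith
  then have "2*x/X^3 * (al - u/(1+u^2)) > 0" using x X0 by simp
  then show ?thesis using e unfolding al_def u_def by simp
qed


lemma qf:
  fixes a d B u v :: real
  assumes "a - B > 0" "d - B > 0" "B > 0" "(u, v) \<noteq> (0, 0)"
  shows "u * (a * u + (- B) * v) + v * ((- B) * u + d * v) > 0"
proof -
  have eq: "u * (a * u + (- B) * v) + v * ((- B) * u + d * v) = (a-B)*u^2 + (d-B) * v^2 + B*(u-v)^2"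
    by (simp add: algebra_simps power2_eq_square)
  have "(a-B)*u^2 + (d-B) * v^2 > 0"
  proof (cases "u = 0")
    case True
    then have "v \<noteq> 0" using assms(4) by simp
    then show ?thesis using True assms(2) by simp
  next
    case False
    then have "(a-B)*u^2 > 0" using assms(1) by simp
    moreover have "(d-B) * v^2 \<ge> 0" using assms(2) by simp
    ultimately show ?thesis by linarith
  qed
  moreover have "B*(u-v)^2 \<ge> 0" using assms(3) by simp
  ultimately show ?thesis unfolding eq by linarith
qed

theorem lemma3p3:
  fixes \<theta> K1 K2 :: real
  assumes "0 < \<theta>" and "\<theta> < pi"
  shows "\<exists>a b c d.
     ((\<lambda>k. total_curv1 \<theta> k K2) has_real_derivative a) (at K1) \<and>
     ((\<lambda>k. total_curv1 \<theta> K1 k) has_real_derivative b) (at K2) \<and>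
     ((\<lambda>k. total_curv2 \<theta> k K2) has_real_derivative c) (at K1) \<and>
     ((\<lambda>k. total_curv2 \<theta> K1 k) has_real_derivative d) (at K2) \<and>
     b = c \<and>
     (\<forall>x y :: real. (x, y) \<noteq> (0, 0) \<longrightarrow> x * (a * x + b * y) + y * (c * x + d * y) > 0)"
proof -
  define s where "s = sin \<theta>"
  define c where "c = cos \<theta>"
  define x1 where "x1 = exp K1"
  define x2 where "x2 = exp K2"
  have s0: "s > 0" unfolding s_def using assms by (simp add: sin_gt_zero)
  have sc: "s^2 + c^2 = 1" unfolding s_def c_def by simp
  have x10: "x1 > 0" and x20: "x2 > 0" unfolding x1_def x2_def by auto
  define A where "A = (\<lambda>x y. 2*x*(pi/2 - arctan ((y + x * c) / (s * sqrt (1 + x^2))))/(sqrt (1 + x^2))^3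
     - 2*x^2 * s * (c-x*y)/((s^2 + x^2 + y^2 + 2*x*y*c)*(sqrt (1 + x^2))^2))"
  define Q where "Q = s^2 + x1^2 + x2^2 + 2*x1*x2*c"
  define B where "B = 2*x1*x2 * s / Q"
  have Qp: "Q > 0"
  proof -
    have "Q = s^2*(1 + x1^2) + (x2 + x1*c)^2" unfolding Q_def using sc by algebra
    then show ?thesis using s0 by (simp add: add_pos_nonneg)
  qed
  have B0: "B > 0" unfolding B_def using x10 x20 s0 Qp by simp
  have h1: "(\<lambda>k. total_curv1 \<theta> k K2) = (\<lambda>k. FF s c (exp k) x2)"
    using T_eq(1)[OF assms] unfolding s_def c_def x2_def by simp
  have h2: "(\<lambda>k. total_curv1 \<theta> K1 k) = (\<lambda>k. FF s c x1 (exp k))"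
    using T_eq(1)[OF assms] unfolding s_def c_def x1_def by simp
  have h3: "(\<lambda>k. total_curv2 \<theta> k K2) = (\<lambda>k. FF s c x2 (exp k))"
    using T_eq(2)[OF assms] unfolding s_def c_def x2_def by simp
  have h4: "(\<lambda>k. total_curv2 \<theta> K1 k) = (\<lambda>k. FF s c (exp k) x1)"
    using T_eq(2)[OF assms] unfolding s_def c_def x1_def by simp
  have da: "((\<lambda>k. total_curv1 \<theta> k K2) has_real_derivative A x1 x2) (at K1)"
    unfolding h1 FF_def A_def x1_def using dA[OF s0 x20 sc, of K1] by simp
  have dd: "((\<lambda>k. total_curv2 \<theta> K1 k) has_real_derivative A x2 x1) (at K2)"
    unfolding h4 FF_def A_def x2_def using dA[OF s0 x10 sc, of K2] by simp
  have db: "((\<lambda>k. total_curv1 \<theta> K1 k) has_real_derivative (- B)) (at K2)"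
    unfolding h2 FF_def B_def Q_def x2_def using dB[OF s0 x10 sc, of K2] by simp
  have dc: "((\<lambda>k. total_curv2 \<theta> k K2) has_real_derivative (- B)) (at K1)"
  proof -
    have "- 2 * x2 * exp K1 * s / (s^2 + x2^2 + (exp K1)^2 + 2 * x2 * exp K1 * c) = - B"
      unfolding B_def Q_def x1_def by (simp add: algebra_simps)
    then show ?thesis unfolding h3 FF_def using dB[OF s0 x20 sc, of K1] by simp
  qed
  have pa: "A x1 x2 - B > 0" unfolding A_def B_def Q_def using diag[OF s0 x10 x20 sc] by simp
  have pd: "A x2 x1 - B > 0"
  proof -
    have "B = 2*x2*x1 * s / (s^2 + x2^2 + x1^2 + 2*x2*x1*c)" unfolding B_def Q_def by (simp add: algebra_simps)
    then show ?thesis unfolding A_def using diag[OF s0 x20 x10 sc] by simp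
  qed
  show ?thesis
    apply (rule exI[of _ "A x1 x2"], rule exI[of _ "- B"], rule exI[of _ "- B"], rule exI[of _ "A x2 x1"])
    using da db dc dd qf[OF pa pd B0] by simp
qed

end
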